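(* With $\omega$ and $(\mathbb G,E)$ as below, $\mathrm{supp}(\omega)=\mathbb G$.
   Context: $D$ finite, $m\ge2$, $\Gamma$ a finite set of cost functions $f:D^n\to\mathbb Q\cup\{\infty\}$, $\mathrm{dom} f=\{x:f(x)<\infty\}$. Maps $\mathbf g=(g_1,\dots,g_m):D^m\to D^m$ act on $x=(x^1,\dots,x^m)\in[D^n]^m$ by $\mathbf g(x)=(g_1(x),\dots,g_m(x))$ with $g_i$ applied coordinatewise; $f^m(x)=\frac1m\sum_i f(x^i)$. A generalized fractional polymorphism of $\Gamma$ of arity $m\to m$ is a finitely supported probability distribution $\rho$ on such maps with $\sum_{\mathbf g}\rho(\mathbf g)f^m(\mathbf g(x))\le f^m(x)$ for all $f\in\Gamma$, $x\in[\mathrm{dom} f]^m$. For $x\in D^m$ and permutation $\pi$, $x^\pi=(x_{\pi(1)},\dots,x_{\pi(m)})$ and $\mathbf g^\pi=(g_{\pi(1)},\dots,g_{\pi(m)})$; $\Omega$ is the set of maps $\mathbf g$ with $\mathbf g^\pi(x)=\mathbf g(x^\pi)$ for all $x,\pi$. Let $\omega$ be a generalized fractional polymorphism of $\Gamma$ of arity $m\to m$ with $\mathrm{supp}(\omega)\subseteq\Omega$ whose support contains the support of every other generalized fractional polymorphism of $\Gamma$ of arity $m\to m$ with support in $\Omega$ (such $\omega$ exists). Let $\mathbb G=\{\mathbf g_k\circ\dots\circ\mathbf g_1:k\ge0,\mathbf g_i\in\mathrm{supp}(\omega)\}$ (with $k=0$ giving the identity $\mathbb 1$) and $E=\{(\mathbf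 g,\mathbf h\circ\mathbf g):\mathbf g\in\mathbb G,\mathbf h\in\mathrm{supp}(\omega)\}$. *)

theory Defs
  imports "HOL-Library.Extended_Real" "HOL-Combinatorics.Permutations"
begin

(* D = 'd (finite type), index set {1..m} = 'm (finite type, CARD('m) = m).
   A tuple in D^m is a function 'm \<Rightarrow> 'd.
   A map g = (g_1,...,g_m) : D^m \<rightarrow> D^m is a function ('m \<Rightarrow> 'd) \<Rightarrow> ('m \<Rightarrow> 'd),
   with g_i = (\<lambda>x. g x i).
   A cost function of arity n is a pair (n, f) with f :: 'd list \<Rightarrow> ereal,
   only evaluated on lists of length n (elements of D^n); \<infinity> plays the role of \<infinity>. *)

type_synonym ('d,'m) gmap = "('m \<Rightarrow> 'd) \<Rightarrow> ('m \<Rightarrow> 'd)"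

definition cost_dom :: "nat \<Rightarrow> ('d list \<Rightarrow> ereal) \<Rightarrow> 'd list set" where
  "cost_dom n f = {x. length x = n \<and> f x < \<infinity>}"

definition rat_valued_cost :: "nat \<Rightarrow> ('d list \<Rightarrow> ereal) \<Rightarrow> bool" where
  "rat_valued_cost n f \<longleftrightarrow>
     (\<forall>x. length x = n \<longrightarrow> f x = \<infinity> \<or> (\<exists>q::rat. f x = ereal (of_rat q)))"

(* g applied to x = (x^1,...,x^m) \<in> [D^n]^m, g_i applied coordinatewise *)
definition gapply :: "nat \<Rightarrow> ('d,'m) gmap \<Rightarrow> ('m \<Rightarrow> 'd list) \<Rightarrow> ('m \<Rightarrow> 'd list)" where
  "gapply n g x = (\<lambda>i. map (\<lambda>j. g (\<lambda>k. x k ! j) i) [0..<n])"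

definition fm :: "('d list \<Rightarrow> ereal) \<Rightarrow> ('m::finite \<Rightarrow> 'd list) \<Rightarrow> ereal" where
  "fm f x = ereal (1 / real (card (UNIV::'m set))) * (\<Sum>i\<in>UNIV. f (x i))"

definition supp :: "('a \<Rightarrow> real) \<Rightarrow> 'a set" where
  "supp \<rho> = {g. \<rho> g \<noteq> 0}"

definition prob_dist :: "('a \<Rightarrow> real) \<Rightarrow> bool" where
  "prob_dist \<rho> \<longleftrightarrow> (\<forall>g. \<rho> g \<ge> 0) \<and> finite (supp \<rho>) \<and> (\<Sum>g\<in>supp \<rho>. \<rho> g) = 1"

definition gen_frac_pol ::
  "(nat \<times> ('d list \<Rightarrow> ereal)) set \<Rightarrow> (('d,'m::finite) gmap \<Rightarrow> real) \<Rightarrow> bool" where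
  "gen_frac_pol \<Gamma> \<rho> \<longleftrightarrow> prob_dist \<rho> \<and>
     (\<forall>(n,f)\<in>\<Gamma>. \<forall>x::'m \<Rightarrow> 'd list. (\<forall>i. x i \<in> cost_dom n f) \<longrightarrow>
        (\<Sum>g\<in>supp \<rho>. ereal (\<rho> g) * fm f (gapply n g x)) \<le> fm f x)"

definition Omega :: "('d,'m) gmap set" where
  "Omega = {g. \<forall>x \<pi>. \<pi> permutes (UNIV::'m set) \<longrightarrow>
                 (\<lambda>i. g x (\<pi> i)) = g (\<lambda>i. x (\<pi> i))}"

(* \<bbbG> = {g_k \<circ> ... \<circ> g_1 : k \<ge> 0, g_i \<in> S}, hs = [g_1,...,g_k] *)
definition comp_closure :: "('a \<Rightarrow> 'a) set \<Rightarrow> ('a \<Rightarrow> 'a) set" where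
  "comp_closure S = {foldl (\<lambda>acc h. h \<circ> acc) id hs | hs. set hs \<subseteq> S}"

end

theory Submission
  imports Defs
begin

lemma card_pos_m: "card (UNIV::'m::finite set) > 0"
  by (simp add: finite_UNIV_card_ge_0)

lemma fm_fin:
  fixes y :: "'m::finite \<Rightarrow> 'd list"
  assumes rv: "rat_valued_cost n f" and dom: "\<forall>i. y i \<in> cost_dom n f"
  shows "\<exists>r. fm f y = ereal r"
proof -
  have "\<forall>i. \<exists>r. f (y i) = ereal r"
    using rv dom unfolding rat_valued_cost_def cost_dom_def by force
  then obtain r where r: "\<And>i. f (y i) = ereal (r i)" by metis
  show ?thesis unfolding fm_def by (simp add: r)
qed

lemma fm_inf:
  fixes y :: "'m::finite \<Rightarrow> 'd list"
  assumes rv: "rat_valued_cost n f" and len: "\<forall>i. length (y i) = n"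
    and nd: "\<not> (\<forall>i. y i \<in> cost_dom n f)"
  shows "fm f y = \<infinity>"
proof -
  from nd len obtain i where "f (y i) = \<infinity>"
    unfolding cost_dom_def by (auto simp: less_top[symmetric])
  hence "(\<Sum>i\<in>UNIV. f (y i)) = \<infinity>" by (auto simp: sum_Pinfty)
  moreover have "1 / real (card (UNIV::'m set)) > 0" using card_pos_m by simp
  ultimately show ?thesis unfolding fm_def by simp
qed

lemma gapply_len: "length (gapply n g x i) = n"
  by (simp add: gapply_def)

lemma gapply_comp: "gapply n (h \<circ> g) x = gapply n h (gapply n g x)"
  by (auto simp: gapply_def fun_eq_iff intro!: map_cong arg_cong[where f=h])

lemma core:
  fixes \<omega> :: "('d, 'm::finite) gmap \<Rightarrow> real"
  assumes gfp: "gen_frac_pol \<Gamma> \<omega>" and inG: "(n,f) \<in> \<Gamma>" and rv: "rat_valued_cost n f"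
    and dom: "\<forall>i. x i \<in> cost_dom n f"
  shows "\<forall>g\<in>supp \<omega>. \<forall>i. gapply n g x i \<in> cost_dom n f"
    and "(\<Sum>g\<in>supp \<omega>. \<omega> g * real_of_ereal (fm f (gapply n g x))) \<le> real_of_ereal (fm f x)"
proof -
  have pd: "prob_dist \<omega>" and ineq: "(\<Sum>g\<in>supp \<omega>. ereal (\<omega> g) * fm f (gapply n g x)) \<le> fm f x"
    using gfp inG dom unfolding gen_frac_pol_def by auto
  have fin: "finite (supp \<omega>)" and pos: "\<And>g. g \<in> supp \<omega> \<Longrightarrow> \<omega> g > 0"
    using pd unfolding prob_dist_def supp_def by (auto simp: order_le_less)
  obtain rx where fx: "fm f x = ereal rx" using fm_fin[OF rv dom] by blast
  show A: "\<forall>g\<in>supp \<omega>. \<forall>i. gapply n g x i \<in> cost_dom n f"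
  proof (rule ccontr)
    assume "\<not> ?thesis"
    then obtain g where g: "g \<in> supp \<omega>" "\<not> (\<forall>i. gapply n g x i \<in> cost_dom n f)" by auto
    have "fm f (gapply n g x) = \<infinity>" using fm_inf[OF rv _ g(2)] by (simp add: gapply_len)
    hence "ereal (\<omega> g) * fm f (gapply n g x) = \<infinity>" using pos[OF g(1)] by simp
    hence "(\<Sum>g\<in>supp \<omega>. ereal (\<omega> g) * fm f (gapply n g x)) = \<infinity>"
      using g(1) fin by (auto simp: sum_Pinfty)
    with ineq have "fm f x = \<infinity>" by simp
    with fx show False by simp
  qed
  have "\<And>g. g \<in> supp \<omega> \<Longrightarrow> ereal (\<omega> g) * fm f (gapply n g x)
      = ereal (\<omega> g * real_of_ereal (fm f (gapply n g x)))"
  proof -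
    fix g assume "g \<in> supp \<omega>"
    then obtain r where "fm f (gapply n g x) = ereal r" using fm_fin[OF rv] A by blast
    thus "ereal (\<omega> g) * fm f (gapply n g x) = ereal (\<omega> g * real_of_ereal (fm f (gapply n g x)))" by simp
  qed
  hence "(\<Sum>g\<in>supp \<omega>. ereal (\<omega> g) * fm f (gapply n g x))
      = ereal (\<Sum>g\<in>supp \<omega>. \<omega> g * real_of_ereal (fm f (gapply n g x)))"
    by simp
  with ineq fx show "(\<Sum>g\<in>supp \<omega>. \<omega> g * real_of_ereal (fm f (gapply n g x))) \<le> real_of_ereal (fm f x)"
    by simp
qed

lemma gapply_id: "\<forall>i. length (x i) = n \<Longrightarrow> gapply n id x = x"
  by (auto simp: gapply_def fun_eq_iff intro: nth_equalityI)

lemma comp_gfp: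
  fixes \<omega> :: "('d, 'm::finite) gmap \<Rightarrow> real"
  assumes gfp: "gen_frac_pol \<Gamma> \<omega>" and rvG: "\<forall>(n,f)\<in>\<Gamma>. rat_valued_cost n f"
  defines "S \<equiv> supp \<omega>"
  defines "\<rho> \<equiv> (\<lambda>k. \<Sum>p\<in>{p\<in>S\<times>S. snd p \<circ> fst p = k}. \<omega> (fst p) * \<omega> (snd p))"
  shows "gen_frac_pol \<Gamma> \<rho>" and "supp \<rho> = (\<lambda>p. snd p \<circ> fst p) ` (S\<times>S)"
proof -
  have pd: "prob_dist \<omega>" using gfp unfolding gen_frac_pol_def by auto
  have fin: "finite S" and pos: "\<And>g. g \<in> S \<Longrightarrow> \<omega> g > 0" and nn: "\<And>g. \<omega> g \<ge> 0"
    and s1: "sum \<omega> S = 1"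
    using pd unfolding prob_dist_def supp_def S_def by (auto simp: order_le_less)
  have finSS: "finite (S\<times>S)" using fin by simp
  show supp: "supp \<rho> = (\<lambda>p. snd p \<circ> fst p) ` (S\<times>S)"
  proof (intro set_eqI iffI)
    fix k assume "k \<in> supp \<rho>"
    have "{p\<in>S\<times>S. snd p \<circ> fst p = k} \<noteq> {}"
    proof
      assume E: "{p\<in>S\<times>S. snd p \<circ> fst p = k} = {}"
      have "\<rho> k = 0" unfolding \<rho>_def E by simp
      with \<open>k \<in> supp \<rho>\<close> show False unfolding supp_def by simp
    qed
    then obtain p where "p \<in> S\<times>S" "snd p \<circ> fst p = k" by blast
    thus "k \<in> (\<lambda>p. snd p \<circ> fst p) ` (S\<times>S)" by (intro rev_image_eqI[of p]) auto
  next
    fix k assume "k \<in> (\<lambda>p. snd p \<circ> fst p) ` (S\<times>S)"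
    then obtain p where p: "p \<in> S\<times>S" "snd p \<circ> fst p = k" by blast
    have pI: "p \<in> {p\<in>S\<times>S. snd p \<circ> fst p = k}" using p by blast
    have pp: "0 < \<omega> (fst p) * \<omega> (snd p)" using p(1) pos by (simp add: mem_Times_iff)
    have "\<rho> k > 0" unfolding \<rho>_def
      by (rule sum_pos2[where f="\<lambda>p. \<omega> (fst p) * \<omega> (snd p)", OF _ pI pp]) (use finSS nn in \<open>simp_all\<close>)
    thus "k \<in> supp \<rho>" unfolding supp_def by auto
  qed
  have finR: "finite (supp \<rho>)" using supp finSS by simp
  have grp: "\<And>F. (\<Sum>k\<in>supp \<rho>. \<rho> k * F k) = (\<Sum>p\<in>S\<times>S. \<omega> (fst p) * \<omega> (snd p) * F (snd p \<circ> fst p))"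
  proof -
    fix F :: "('d,'m) gmap \<Rightarrow> real"
    have "(\<Sum>k\<in>supp \<rho>. \<rho> k * F k) = (\<Sum>k\<in>supp \<rho>. \<Sum>p\<in>{p\<in>S\<times>S. snd p \<circ> fst p = k}. \<omega> (fst p) * \<omega> (snd p) * F (snd p \<circ> fst p))"
      unfolding \<rho>_def by (auto simp: sum_distrib_right intro!: sum.cong)
    also have "\<dots> = (\<Sum>p\<in>S\<times>S. \<omega> (fst p) * \<omega> (snd p) * F (snd p \<circ> fst p))"
      by (rule sum.group[OF finSS finR]) (simp add: supp)
    finally show "?thesis F" .
  qed
  have prod: "\<And>G. (\<Sum>p\<in>S\<times>S. G p) = (\<Sum>g\<in>S. \<Sum>h\<in>S. G (g,h))"
    by (simp add: sum.cartesian_product)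
  have "(\<Sum>k\<in>supp \<rho>. \<rho> k) = 1"
  proof -
    have "(\<Sum>k\<in>supp \<rho>. \<rho> k) = (\<Sum>p\<in>S\<times>S. \<omega> (fst p) * \<omega> (snd p))"
      using grp[of "\<lambda>_. 1"] by simp
    also have "\<dots> = (\<Sum>g\<in>S. \<Sum>h\<in>S. \<omega> g * \<omega> h)" using prod[of "\<lambda>p. \<omega> (fst p) * \<omega> (snd p)"] by simp
    also have "\<dots> = sum \<omega> S * sum \<omega> S" by (rule sum_product[symmetric])
    finally show ?thesis using s1 by simp
  qed
  moreover have "\<forall>g. \<rho> g \<ge> 0" unfolding \<rho>_def by (auto intro!: sum_nonneg mult_nonneg_nonneg nn)
  ultimately have pdr: "prob_dist \<rho>" unfolding prob_dist_def using finR by auto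
  show "gen_frac_pol \<Gamma> \<rho>"
    unfolding gen_frac_pol_def
  proof (intro conjI pdr ballI allI impI, clarify)
    fix n f and x :: "'m \<Rightarrow> 'd list"
    assume inG: "(n,f) \<in> \<Gamma>" and dom: "\<forall>i. x i \<in> cost_dom n f"
    have rv: "rat_valued_cost n f" using rvG inG by auto
    note c1 = core[OF gfp inG rv dom, folded S_def]
    define F where "F k = real_of_ereal (fm f (gapply n k x))" for k
    have dk: "\<forall>i. gapply n (h \<circ> g) x i \<in> cost_dom n f" if "g \<in> S" "h \<in> S" for g h
      using core(1)[OF gfp inG rv, of "gapply n g x", folded S_def] c1(1) that
      by (simp add: gapply_comp)
    have "\<And>k. k \<in> supp \<rho> \<Longrightarrow> ereal (\<rho> k) * fm f (gapply n k x) = ereal (\<rho> k * F k)"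
    proof -
      fix k assume "k \<in> supp \<rho>"
      then obtain g h where "g \<in> S" "h \<in> S" "k = h \<circ> g" using supp by auto
      then obtain r where "fm f (gapply n k x) = ereal r" using fm_fin[OF rv] dk by blast
      thus "ereal (\<rho> k) * fm f (gapply n k x) = ereal (\<rho> k * F k)" by (simp add: F_def)
    qed
    hence L: "(\<Sum>k\<in>supp \<rho>. ereal (\<rho> k) * fm f (gapply n k x)) = ereal (\<Sum>k\<in>supp \<rho>. \<rho> k * F k)"
      by simp
    have "(\<Sum>k\<in>supp \<rho>. \<rho> k * F k) = (\<Sum>g\<in>S. \<omega> g * (\<Sum>h\<in>S. \<omega> h * F (h \<circ> g)))"
      by (simp add: grp prod sum_distrib_left mult.assoc)
    also have "\<dots> \<le> (\<Sum>g\<in>S. \<omega> g * F g)"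
    proof (rule sum_mono, rule mult_left_mono[OF _ nn])
      fix g assume g: "g \<in> S"
      have "\<forall>i. gapply n g x i \<in> cost_dom n f" using c1(1) g by auto
      from core(2)[OF gfp inG rv this, folded S_def]
      show "(\<Sum>h\<in>S. \<omega> h * F (h \<circ> g)) \<le> F g" by (simp add: F_def gapply_comp)
    qed
    also have "\<dots> \<le> real_of_ereal (fm f x)" using c1(2) by (simp add: F_def)
    finally have R: "(\<Sum>k\<in>supp \<rho>. \<rho> k * F k) \<le> real_of_ereal (fm f x)" .
    obtain rx where fx: "fm f x = ereal rx" using fm_fin[OF rv dom] by blast
    show "(\<Sum>k\<in>supp \<rho>. ereal (\<rho> k) * fm f (gapply n k x)) \<le> fm f x"
      using L R fx by simp
  qed
qed

lemma Omega_comp: "g \<in> Omega \<Longrightarrow> h \<in> Omega \<Longrightarrow> h \<circ> g \<in> Omega"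
  unfolding Omega_def by (auto simp: fun_eq_iff)

lemma foldl_in: "acc \<in> S \<Longrightarrow> set hs \<subseteq> S \<Longrightarrow> (\<And>g h. g \<in> S \<Longrightarrow> h \<in> S \<Longrightarrow> h \<circ> g \<in> S)
  \<Longrightarrow> foldl (\<lambda>acc h. h \<circ> acc) acc hs \<in> S"
  by (induction hs arbitrary: acc) auto

theorem proposition6p2:
  fixes \<Gamma> :: "(nat \<times> ('d::finite list \<Rightarrow> ereal)) set"
    and \<omega> :: "('d, 'm::finite) gmap \<Rightarrow> real"
  assumes m2: "card (UNIV::'m set) \<ge> 2"
    and finGamma: "finite \<Gamma>"
    and ratGamma: "\<forall>(n,f)\<in>\<Gamma>. rat_valued_cost n f"
    and omega_gfp: "gen_frac_pol \<Gamma> \<omega>"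
    and omega_Omega: "supp \<omega> \<subseteq> Omega"
    and omega_max: "\<forall>\<rho>. gen_frac_pol \<Gamma> \<rho> \<and> supp \<rho> \<subseteq> Omega \<longrightarrow> supp \<rho> \<subseteq> supp \<omega>"
  shows "supp \<omega> = comp_closure (supp \<omega>)"
proof -
  define \<rho>0 :: "('d, 'm) gmap \<Rightarrow> real" where "\<rho>0 = (\<lambda>g. if g = id then 1 else 0)"
  have s0: "supp \<rho>0 = {id}" unfolding supp_def \<rho>0_def by auto
  have "gen_frac_pol \<Gamma> \<rho>0"
    unfolding gen_frac_pol_def prob_dist_def
  proof (intro conjI ballI allI impI)
    fix g show "0 \<le> \<rho>0 g" by (simp add: \<rho>0_def)
  next
    show "finite (supp \<rho>0)" by (simp add: s0)
  next
    show "sum \<rho>0 (supp \<rho>0) = 1" unfolding s0 by (simp add: \<rho>0_def)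
  next
    fix p and x :: "'m \<Rightarrow> 'd list" assume "p \<in> \<Gamma>"
    obtain n f where p: "p = (n,f)" by fastforce
    show "case p of (n, f) \<Rightarrow> \<forall>x. (\<forall>i. x i \<in> cost_dom n f) \<longrightarrow>
        (\<Sum>g\<in>supp \<rho>0. ereal (\<rho>0 g) * fm f (gapply n g x)) \<le> fm f x"
      unfolding p
    proof (clarify)
      fix x :: "'m \<Rightarrow> 'd list" assume "\<forall>i. x i \<in> cost_dom n f"
      hence "\<forall>i. length (x i) = n" by (simp add: cost_dom_def)
      thus "(\<Sum>g\<in>supp \<rho>0. ereal (\<rho>0 g) * fm f (gapply n g x)) \<le> fm f x"
        unfolding s0 by (simp add: \<rho>0_def gapply_id)
    qed
  qed
  moreover have "id \<in> Omega" by (simp add: Omega_def)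
  ultimately have "supp \<rho>0 \<subseteq> supp \<omega>" using omega_max s0 by (metis empty_subsetI insert_subset)
  hence idS: "id \<in> supp \<omega>" unfolding s0 by simp
  have compS: "h \<circ> g \<in> supp \<omega>" if "g \<in> supp \<omega>" "h \<in> supp \<omega>" for g h
  proof -
    note cg = comp_gfp[OF omega_gfp ratGamma]
    have "supp (\<lambda>k. \<Sum>p\<in>{p\<in>supp \<omega>\<times>supp \<omega>. snd p \<circ> fst p = k}. \<omega> (fst p) * \<omega> (snd p)) \<subseteq> Omega"
      unfolding cg(2) using omega_Omega by (auto intro!: Omega_comp)
    with cg(1) omega_max have "supp (\<lambda>k. \<Sum>p\<in>{p\<in>supp \<omega>\<times>supp \<omega>. snd p \<circ> fst p = k}. \<omega> (fst p) * \<omega> (snd p)) \<subseteq> supp \<omega>"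
      by blast
    moreover have "h \<circ> g \<in> (\<lambda>p. snd p \<circ> fst p) ` (supp \<omega> \<times> supp \<omega>)"
      using that by (intro rev_image_eqI[of "(g,h)"]) auto
    ultimately show ?thesis unfolding cg(2) by blast
  qed
  show ?thesis
  proof
    show "supp \<omega> \<subseteq> comp_closure (supp \<omega>)"
    proof
      fix g assume "g \<in> supp \<omega>"
      hence "set [g] \<subseteq> supp \<omega> \<and> g = foldl (\<lambda>acc h. h \<circ> acc) id [g]" by simp
      thus "g \<in> comp_closure (supp \<omega>)" unfolding comp_closure_def by blast
    qed
  next
    show "comp_closure (supp \<omega>) \<subseteq> supp \<omega>"
      unfolding comp_closure_def using foldl_in[OF idS _ compS] by blast
  qed
qed

end
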